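(* Let $c$ be the pullback closure operator on $\mathsf{Qnd}$ associated with the reflection $\pi_0\dashv U$. Then: (1) $c_X(\{x\})=[x]_X$ for every quandle $X$ and $x\in X$; (2) for any family $(S_i)_{i\in I}$ of subquandles of $X$, $c_X(\bigvee_{i\in I}S_i)=\bigvee_{i\in I}c_X(S_i)$, where $\bigvee$ denotes the smallest subquandle containing the given ones; (3) for quandles $X_1,\dots,X_n$ and subquandles $M_i\subseteq X_i$, $c_{X}(\prod_{i=1}^n M_i)=\prod_{i=1}^n c_{X_i}(M_i)$ where $X=\prod_{i=1}^n X_i$; (4) for any surjective homomorphism $f\colon X\to Y$ and subquandle $M\subseteq X$, $f(c_X(M))=c_Y(f(M))$.
   Context: A quandle is a set $X$ with two binary operations $\lhd,\lhd^{-1}$ satisfying, for all $x,y,z\in X$: $x\lhd x = x = x\lhd^{-1}x$; $(x\lhd y)\lhd^{-1}y = x = (x\lhd^{-1}y)\lhd y$; $(x\lhd y)\lhd z = (x\lhd z)\lhd(y\lhd z)$ and $(x\lhd^{-1}y)\lhd^{-1}z = (x\lhd^{-1}z)\lhd^{-1}(y\lhd^{-1}z)$. Homomorphisms preserve both operations; $\mathsf{Qnd}$ is the resulting category. A quandle is trivial if $x\lhd y = x = x\lhd^{-1}y$ for all $x,y$; these form the full subcategory $\mathsf{Qnd}^*$, with inclusion $U$. For $x\in X$, the orbit $[x]_X$ is the set of all elements $x\lhd^{\alpha_1}x_1\cdots\lhd^{\alpha_n}x_n$ ($n\ge 0$, $x_i\in X$, $\lhd^{\alpha_i}\in\{\lhd,\lhd^{-1}\}$,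 bracketed from the left). The functor $\pi_0\colon\mathsf{Qnd}\to\mathsf{Qnd}^*$ sends $X$ to the trivial quandle of its orbits and is left adjoint to $U$, with unit $\eta_X\colon X\to U\pi_0(X)$, $x\mapsto[x]_X$. The pullback closure operator $c$: for a subquandle $M\subseteq X$ with inclusion $m$, $c_X(M)$ is the inverse image under $\eta_X$ of the image of $U\pi_0(m)\colon U\pi_0(M)\to U\pi_0(X)$. *)

theory Defs
  imports Main "HOL-Library.FuncSet"
begin

text \<open>A quandle is represented by its carrier set together with the two operations
  (x \<lhd> y written qop X x y, x \<lhd>^-1 y written qinv X x y).\<close>

record 'a qnd =
  qcar :: "'a set"
  qop  :: "'a \<Rightarrow> 'a \<Rightarrow> 'a"
  qinv :: "'a \<Rightarrow> 'a \<Rightarrow> 'a"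

definition quandle :: "'a qnd \<Rightarrow> bool" where
  "quandle X \<longleftrightarrow>
     (\<forall>x\<in>qcar X. \<forall>y\<in>qcar X. qop X x y \<in> qcar X \<and> qinv X x y \<in> qcar X) \<and>
     (\<forall>x\<in>qcar X. qop X x x = x \<and> qinv X x x = x) \<and>
     (\<forall>x\<in>qcar X. \<forall>y\<in>qcar X. qinv X (qop X x y) y = x \<and> qop X (qinv X x y) y = x) \<and>
     (\<forall>x\<in>qcar X. \<forall>y\<in>qcar X. \<forall>z\<in>qcar X.
        qop X (qop X x y) z = qop X (qop X x z) (qop X y z) \<and>
        qinv X (qinv X x y) z = qinv X (qinv X x z) (qinv X y z))"

definition qhom :: "'a qnd \<Rightarrow> 'b qnd \<Rightarrow> ('a \<Rightarrow> 'b) \<Rightarrow> bool" where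
  "qhom X Y f \<longleftrightarrow> (\<forall>x\<in>qcar X. f x \<in> qcar Y) \<and>
     (\<forall>x\<in>qcar X. \<forall>y\<in>qcar X. f (qop X x y) = qop Y (f x) (f y) \<and> f (qinv X x y) = qinv Y (f x) (f y))"

definition subquandle :: "'a set \<Rightarrow> 'a qnd \<Rightarrow> bool" where
  "subquandle M X \<longleftrightarrow> M \<subseteq> qcar X \<and>
     (\<forall>x\<in>M. \<forall>y\<in>M. qop X x y \<in> M \<and> qinv X x y \<in> M)"

definition subqnd :: "'a qnd \<Rightarrow> 'a set \<Rightarrow> 'a qnd" where
  "subqnd X M = X\<lparr>qcar := M\<rparr>"

definition sub_gen :: "'a qnd \<Rightarrow> 'a set \<Rightarrow> 'a set" where
  "sub_gen X A = \<Inter>{M. subquandle M X \<and> A \<subseteq> M}"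

text \<open>Orbit [x]_X: all x \<lhd>^{a1} x1 ... \<lhd>^{an} xn, bracketed from the left.\<close>
inductive_set orbit :: "'a qnd \<Rightarrow> 'a \<Rightarrow> 'a set" for X :: "'a qnd" and x :: 'a where
  orbit_base: "x \<in> orbit X x"
| orbit_op: "y \<in> orbit X x \<Longrightarrow> z \<in> qcar X \<Longrightarrow> qop X y z \<in> orbit X x"
| orbit_inv: "y \<in> orbit X x \<Longrightarrow> z \<in> qcar X \<Longrightarrow> qinv X y z \<in> orbit X x"

text \<open>U pi_0(X): the (underlying set of the trivial quandle of) orbits; unit eta_X.\<close>
definition pi0 :: "'a qnd \<Rightarrow> 'a set set" where
  "pi0 X = orbit X ` qcar X"

definition eta :: "'a qnd \<Rightarrow> 'a \<Rightarrow> 'a set" where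
  "eta X x = orbit X x"

text \<open>pi_0 on morphisms: [a]_X \<mapsto> [f a]_Y.\<close>
definition pi0_map :: "'a qnd \<Rightarrow> 'b qnd \<Rightarrow> ('a \<Rightarrow> 'b) \<Rightarrow> 'a set \<Rightarrow> 'b set" where
  "pi0_map X Y f o' = orbit Y (f (SOME a. a \<in> o'))"

text \<open>Pullback closure: c_X(M) = eta_X^{-1}(image of U pi_0(m)), m the inclusion M \<hookrightarrow> X.\<close>
definition pb_closure :: "'a qnd \<Rightarrow> 'a set \<Rightarrow> 'a set" where
  "pb_closure X M = {x \<in> qcar X. eta X x \<in> pi0_map (subqnd X M) X id ` pi0 (subqnd X M)}"

definition prod_qnd :: "nat \<Rightarrow> (nat \<Rightarrow> 'a qnd) \<Rightarrow> (nat \<Rightarrow> 'a) qnd" where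
  "prod_qnd n X = \<lparr> qcar = (\<Pi>\<^sub>E i\<in>{..<n}. qcar (X i)),
     qop = (\<lambda>f g. restrict (\<lambda>i. qop (X i) (f i) (g i)) {..<n}),
     qinv = (\<lambda>f g. restrict (\<lambda>i. qinv (X i) (f i) (g i)) {..<n}) \<rparr>"

end

theory Submission
  imports Defs
begin

lemma orbit_sub:
  assumes q: "quandle X" and x: "x \<in> qcar X"
  shows "orbit X x \<subseteq> qcar X"
proof
  fix y assume "y \<in> orbit X x"
  then show "y \<in> qcar X"
    by induction (use q x in \<open>auto simp: quandle_def\<close>)
qed

lemma orbit_trans:
  assumes "y \<in> orbit X x" and "w \<in> orbit X y"
  shows "w \<in> orbit X x"
  using assms(2) by induction (auto intro: orbit.intros assms(1))

lemma orbit_sym: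
  assumes q: "quandle X" and x: "x \<in> qcar X" and y: "y \<in> orbit X x"
  shows "x \<in> orbit X y"
  using y
proof induction
  case orbit_base then show ?case by (rule orbit.orbit_base)
next
  case (orbit_op w z)
  have w: "w \<in> qcar X" using orbit_sub[OF q x] orbit_op(1) by auto
  have "qinv X (qop X w z) z = w" using q w orbit_op(2) by (simp add: quandle_def)
  moreover have "qinv X (qop X w z) z \<in> orbit X (qop X w z)"
    using orbit_op(2) by (intro orbit.orbit_inv orbit.orbit_base)
  ultimately have "w \<in> orbit X (qop X w z)" by simp
  then show ?case using orbit_op(3) orbit_trans by metis
next
  case (orbit_inv w z)
  have w: "w \<in> qcar X" using orbit_sub[OF q x] orbit_inv(1) by auto
  have "qop X (qinv X w z) z = w" using q w orbit_inv(2) by (simp add: quandle_def)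
  moreover have "qop X (qinv X w z) z \<in> orbit X (qinv X w z)"
    using orbit_inv(2) by (intro orbit.orbit_op orbit.orbit_base)
  ultimately have "w \<in> orbit X (qinv X w z)" by simp
  then show ?case using orbit_inv(3) orbit_trans by metis
qed

lemma orbit_eq:
  assumes q: "quandle X" and x: "x \<in> qcar X" and y: "y \<in> orbit X x"
  shows "orbit X y = orbit X x"
  using orbit_trans[OF y] orbit_trans[OF orbit_sym[OF q x y]] by blast

lemma sub_orbit:
  assumes "M \<subseteq> qcar X"
  shows "orbit (subqnd X M) m \<subseteq> orbit X m"
proof
  fix y assume "y \<in> orbit (subqnd X M) m"
  then show "y \<in> orbit X m"
    by induction (use assms in \<open>auto simp: subqnd_def intro: orbit.intros\<close>)
qed

lemma pb_char:
  assumes q: "quandle X" and M: "M \<subseteq> qcar X"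
  shows "pb_closure X M = (\<Union>m\<in>M. orbit X m)"
proof -
  have key: "orbit X (SOME a. a \<in> orbit (subqnd X M) m) = orbit X m" if m: "m \<in> M" for m
  proof -
    have "(SOME a. a \<in> orbit (subqnd X M) m) \<in> orbit (subqnd X M) m"
      by (rule someI, rule orbit.orbit_base)
    then have "(SOME a. a \<in> orbit (subqnd X M) m) \<in> orbit X m" using sub_orbit[OF M] by blast
    then show ?thesis using orbit_eq[OF q] m M by blast
  qed
  have "x \<in> pb_closure X M \<longleftrightarrow> x \<in> (\<Union>m\<in>M. orbit X m)" for x
  proof
    assume "x \<in> pb_closure X M"
    then obtain m where x: "x \<in> qcar X" and m: "m \<in> M"
      and e: "orbit X x = orbit X (SOME a. a \<in> orbit (subqnd X M) m)"
      by (auto simp: pb_closure_def pi0_def eta_def pi0_map_def subqnd_def)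
    have "x \<in> orbit X x" by (rule orbit.orbit_base)
    then have "x \<in> orbit X m" using e key[OF m] by simp
    then show "x \<in> (\<Union>m\<in>M. orbit X m)" using m by blast
  next
    assume "x \<in> (\<Union>m\<in>M. orbit X m)"
    then obtain m where m: "m \<in> M" and xm: "x \<in> orbit X m" by blast
    have x: "x \<in> qcar X" using orbit_sub[OF q] m M xm by blast
    have "orbit X x = orbit X (SOME a. a \<in> orbit (subqnd X M) m)"
      using key[OF m] orbit_eq[OF q _ xm] m M by auto
    moreover have "m \<in> qcar (subqnd X M)" using m by (simp add: subqnd_def)
    ultimately show "x \<in> pb_closure X M" using x
      by (auto simp: pb_closure_def pi0_def eta_def pi0_map_def)
  qed
  then show ?thesis by blast
qed

lemma C_subq:
  assumes q: "quandle X" and A: "A \<subseteq> qcar X"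
  shows "subquandle (\<Union>a\<in>A. orbit X a) X"
  unfolding subquandle_def
proof (intro conjI ballI)
  show "(\<Union>a\<in>A. orbit X a) \<subseteq> qcar X" using orbit_sub[OF q] A by blast
next
  fix x y assume x: "x \<in> (\<Union>a\<in>A. orbit X a)" and y: "y \<in> (\<Union>a\<in>A. orbit X a)"
  have yc: "y \<in> qcar X" using orbit_sub[OF q] A y by blast
  from x obtain a where "a \<in> A" "x \<in> orbit X a" by blast
  then show "qop X x y \<in> (\<Union>a\<in>A. orbit X a)" "qinv X x y \<in> (\<Union>a\<in>A. orbit X a)"
    using yc by (auto intro: orbit.intros)
qed

lemma car_subq: "quandle X \<Longrightarrow> subquandle (qcar X) X"
  unfolding subquandle_def quandle_def by (intro conjI subset_refl) blast

lemma sub_gen_sub: "quandle X \<Longrightarrow> sub_gen X A \<subseteq> qcar X" if "A \<subseteq> qcar X"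
proof -
  assume "quandle X"
  then have "qcar X \<in> {M. subquandle M X \<and> A \<subseteq> M}" using car_subq that by blast
  then show ?thesis unfolding sub_gen_def by (rule Inter_lower)
qed

lemma sub_gen_ge: "A \<subseteq> sub_gen X A"
  unfolding sub_gen_def by (rule Inter_greatest) simp

lemma sub_gen_least: "subquandle M X \<Longrightarrow> A \<subseteq> M \<Longrightarrow> sub_gen X A \<subseteq> M"
  unfolding sub_gen_def by (rule Inter_lower) simp

lemma sub_gen_id: "subquandle A X \<Longrightarrow> sub_gen X A = A"
  by (rule equalityI[OF sub_gen_least[OF _ subset_refl] sub_gen_ge])

lemma part2:
  assumes q: "quandle X" and S: "\<forall>i\<in>I. subquandle (S i) X"
  shows "pb_closure X (sub_gen X (\<Union>i\<in>I. S i)) = sub_gen X (\<Union>i\<in>I. pb_closure X (S i))"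
proof -
  let ?U = "\<Union>i\<in>I. S i"
  let ?G = "sub_gen X ?U"
  have U: "?U \<subseteq> qcar X" using S by (auto simp: subquandle_def)
  have G: "?G \<subseteq> qcar X" using sub_gen_sub[OF U q] .
  have CU: "subquandle (\<Union>a\<in>?U. orbit X a) X" using C_subq[OF q U] .
  have UC: "?U \<subseteq> (\<Union>a\<in>?U. orbit X a)" by (blast intro: orbit.orbit_base)
  have GC: "?G \<subseteq> (\<Union>a\<in>?U. orbit X a)" using sub_gen_least[OF CU UC] .
  have e1: "pb_closure X ?G = (\<Union>a\<in>?G. orbit X a)" using pb_char[OF q G] .
  have e2: "(\<Union>a\<in>?G. orbit X a) = (\<Union>a\<in>?U. orbit X a)"
  proof
    show "(\<Union>a\<in>?G. orbit X a) \<subseteq> (\<Union>a\<in>?U. orbit X a)"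
    proof
      fix x assume "x \<in> (\<Union>a\<in>?G. orbit X a)"
      then obtain g where g: "g \<in> ?G" "x \<in> orbit X g" by blast
      then obtain u where u: "u \<in> ?U" "g \<in> orbit X u" using GC by blast
      show "x \<in> (\<Union>a\<in>?U. orbit X a)" using orbit_trans[OF u(2) g(2)] u(1) by blast
    qed
    show "(\<Union>a\<in>?U. orbit X a) \<subseteq> (\<Union>a\<in>?G. orbit X a)"
      using sub_gen_ge[of ?U X] by blast
  qed
  have e3: "(\<Union>a\<in>?U. orbit X a) = (\<Union>i\<in>I. pb_closure X (S i))"
  proof -
    have "pb_closure X (S i) = (\<Union>a\<in>S i. orbit X a)" if "i \<in> I" for i
      using pb_char[OF q] S that by (auto simp: subquandle_def)
    then show ?thesis by auto
  qed
  have "sub_gen X (\<Union>i\<in>I. pb_closure X (S i)) = (\<Union>i\<in>I. pb_closure X (S i))"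
    using sub_gen_id CU e3 by simp
  then show ?thesis using e1 e2 e3 by simp
qed

lemma orbit_hom:
  assumes q: "quandle X" and h: "qhom X Y f" and s: "f ` qcar X = qcar Y" and m: "m \<in> qcar X"
  shows "f ` orbit X m = orbit Y (f m)"
proof
  show "f ` orbit X m \<subseteq> orbit Y (f m)"
  proof
    fix y assume "y \<in> f ` orbit X m"
    then obtain x where x: "x \<in> orbit X m" and y: "y = f x" by blast
    have "f x \<in> orbit Y (f m)" using x
    proof induction
      case orbit_base then show ?case by (rule orbit.orbit_base)
    next
      case (orbit_op w z)
      have "w \<in> qcar X" using orbit_sub[OF q m] orbit_op(1) by blast
      then have "f (qop X w z) = qop Y (f w) (f z)" using h orbit_op(2) by (simp add: qhom_def)
      moreover have "f z \<in> qcar Y" using h orbit_op(2) by (simp add: qhom_def)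
      ultimately show ?case using orbit_op(3) by (simp add: orbit.orbit_op)
    next
      case (orbit_inv w z)
      have "w \<in> qcar X" using orbit_sub[OF q m] orbit_inv(1) by blast
      then have "f (qinv X w z) = qinv Y (f w) (f z)" using h orbit_inv(2) by (simp add: qhom_def)
      moreover have "f z \<in> qcar Y" using h orbit_inv(2) by (simp add: qhom_def)
      ultimately show ?case using orbit_inv(3) by (simp add: orbit.orbit_inv)
    qed
    then show "y \<in> orbit Y (f m)" using y by simp
  qed
next
  show "orbit Y (f m) \<subseteq> f ` orbit X m"
  proof
    fix y assume "y \<in> orbit Y (f m)"
    then show "y \<in> f ` orbit X m"
    proof induction
      case orbit_base then show ?case by (blast intro: orbit.orbit_base)
    next
      case (orbit_op w z)
      then obtain w' z' where w': "w' \<in> orbit X m" "w = f w'" and z': "z' \<in> qcar X" "z = f z'"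
        using s by blast
      have "w' \<in> qcar X" using orbit_sub[OF q m] w' by blast
      then have "f (qop X w' z') = qop Y w z" using h z' w' by (simp add: qhom_def)
      moreover have "qop X w' z' \<in> orbit X m" using w' z' by (simp add: orbit.intros)
      ultimately show ?case by (metis image_eqI)
    next
      case (orbit_inv w z)
      then obtain w' z' where w': "w' \<in> orbit X m" "w = f w'" and z': "z' \<in> qcar X" "z = f z'"
        using s by blast
      have "w' \<in> qcar X" using orbit_sub[OF q m] w' by blast
      then have "f (qinv X w' z') = qinv Y w z" using h z' w' by (simp add: qhom_def)
      moreover have "qinv X w' z' \<in> orbit X m" using w' z' by (simp add: orbit.intros)
      ultimately show ?case by (metis image_eqI)
    qed
  qed
qed

lemma part4:
  assumes q: "quandle X" and qY: "quandle Y" and h: "qhom X Y f" and s: "f ` qcar X = qcar Y"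
    and M: "subquandle M X"
  shows "f ` pb_closure X M = pb_closure Y (f ` M)"
proof -
  have M': "M \<subseteq> qcar X" using M by (simp add: subquandle_def)
  have fM: "f ` M \<subseteq> qcar Y" using M' s by blast
  have "f ` pb_closure X M = (\<Union>m\<in>M. f ` orbit X m)" using pb_char[OF q M'] by auto
  also have "\<dots> = (\<Union>m\<in>M. orbit Y (f m))" by (rule SUP_cong[OF refl]) (use orbit_hom[OF q h s] M' in blast)
  also have "\<dots> = pb_closure Y (f ` M)" using pb_char[OF qY fM] by (simp add: image_image)
  finally show ?thesis .
qed



lemma qax:
  assumes "quandle X" "x \<in> qcar X" "y \<in> qcar X"
  shows "qop X x y \<in> qcar X" "qinv X x y \<in> qcar X" "qop X x x = x" "qinv X x x = x"
    "qinv X (qop X x y) y = x" "qop X (qinv X x y) y = x"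
  using assms unfolding quandle_def by meson+

lemma qdist:
  assumes "quandle X" "x \<in> qcar X" "y \<in> qcar X" "z \<in> qcar X"
  shows "qop X (qop X x y) z = qop X (qop X x z) (qop X y z)"
    "qinv X (qinv X x y) z = qinv X (qinv X x z) (qinv X y z)"
  using assms unfolding quandle_def by meson+

lemma prod_op:
  "qop (prod_qnd n Xs) f g = (\<lambda>i. if i < n then qop (Xs i) (f i) (g i) else undefined)"
  "qinv (prod_qnd n Xs) f g = (\<lambda>i. if i < n then qinv (Xs i) (f i) (g i) else undefined)"
  by (simp_all add: prod_qnd_def restrict_def fun_eq_iff)

lemma prod_car: "f \<in> qcar (prod_qnd n Xs) \<longleftrightarrow> (\<forall>i. (i < n \<longrightarrow> f i \<in> qcar (Xs i)) \<and> (\<not> i < n \<longrightarrow> f i = undefined))"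
  by (auto simp: prod_qnd_def PiE_iff extensional_def)

lemma prod_closed:
  assumes f: "f \<in> qcar (prod_qnd n Xs)" and g: "g \<in> qcar (prod_qnd n Xs)"
    and q': "\<And>i. i < n \<Longrightarrow> quandle (Xs i)"
  shows "(\<lambda>i. if i < n then qop (Xs i) (f i) (g i) else undefined) \<in> qcar (prod_qnd n Xs)"
    "(\<lambda>i. if i < n then qinv (Xs i) (f i) (g i) else undefined) \<in> qcar (prod_qnd n Xs)"
proof -
  have fg: "f i \<in> qcar (Xs i)" "g i \<in> qcar (Xs i)" if "i < n" for i
    using f g that unfolding prod_car by blast+
  show "(\<lambda>i. if i < n then qop (Xs i) (f i) (g i) else undefined) \<in> qcar (prod_qnd n Xs)"
    unfolding prod_car using qax(1)[OF q' fg] by simp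
  show "(\<lambda>i. if i < n then qinv (Xs i) (f i) (g i) else undefined) \<in> qcar (prod_qnd n Xs)"
    unfolding prod_car using qax(2)[OF q' fg] by simp
qed

lemma prod_quandle:
  assumes q: "\<forall>i<n. quandle (Xs i)"
  shows "quandle (prod_qnd n Xs)"
proof -
  have q': "\<And>i. i < n \<Longrightarrow> quandle (Xs i)" using q by blast
  have cI: "\<And>f i. f \<in> qcar (prod_qnd n Xs) \<Longrightarrow> i < n \<Longrightarrow> f i \<in> qcar (Xs i)"
    unfolding prod_car by blast
  have cU: "\<And>f i. f \<in> qcar (prod_qnd n Xs) \<Longrightarrow> \<not> i < n \<Longrightarrow> f i = undefined"
    unfolding prod_car by blast
  show ?thesis
  unfolding quandle_def prod_op
  proof (intro conjI ballI)
    fix f g assume f: "f \<in> qcar (prod_qnd n Xs)" and g: "g \<in> qcar (prod_qnd n Xs)"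
    show "(\<lambda>i. if i < n then qop (Xs i) (f i) (g i) else undefined) \<in> qcar (prod_qnd n Xs)"
      "(\<lambda>i. if i < n then qinv (Xs i) (f i) (g i) else undefined) \<in> qcar (prod_qnd n Xs)"
      using f g q' by (simp_all add: prod_closed)
    show "(\<lambda>i. if i < n then qinv (Xs i) (if i < n then qop (Xs i) (f i) (g i) else undefined) (g i) else undefined) = f"
      by (rule ext) (simp add: qax(5)[OF q' cI[OF f] cI[OF g]] cU[OF f])
    show "(\<lambda>i. if i < n then qop (Xs i) (if i < n then qinv (Xs i) (f i) (g i) else undefined) (g i) else undefined) = f"
      by (rule ext) (simp add: qax(6)[OF q' cI[OF f] cI[OF g]] cU[OF f])
  next
    fix f assume f: "f \<in> qcar (prod_qnd n Xs)"
    show "(\<lambda>i. if i < n then qop (Xs i) (f i) (f i) else undefined) = f"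
      by (rule ext) (simp add: qax(3)[OF q' cI[OF f] cI[OF f]] cU[OF f])
    show "(\<lambda>i. if i < n then qinv (Xs i) (f i) (f i) else undefined) = f"
      by (rule ext) (simp add: qax(4)[OF q' cI[OF f] cI[OF f]] cU[OF f])
  next
    fix f g h assume f: "f \<in> qcar (prod_qnd n Xs)" and g: "g \<in> qcar (prod_qnd n Xs)"
      and h: "h \<in> qcar (prod_qnd n Xs)"
    show "(\<lambda>i. if i < n then qop (Xs i) (if i < n then qop (Xs i) (f i) (g i) else undefined) (h i) else undefined) =
      (\<lambda>i. if i < n then qop (Xs i) (if i < n then qop (Xs i) (f i) (h i) else undefined) (if i < n then qop (Xs i) (g i) (h i) else undefined) else undefined)"
      by (rule ext) (simp add: qdist(1)[OF q' cI[OF f] cI[OF g] cI[OF h]])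
    show "(\<lambda>i. if i < n then qinv (Xs i) (if i < n then qinv (Xs i) (f i) (g i) else undefined) (h i) else undefined) =
      (\<lambda>i. if i < n then qinv (Xs i) (if i < n then qinv (Xs i) (f i) (h i) else undefined) (if i < n then qinv (Xs i) (g i) (h i) else undefined) else undefined)"
      by (rule ext) (simp add: qdist(2)[OF q' cI[OF f] cI[OF g] cI[OF h]])
  qed
qed

lemma orbit_sub':
  assumes q: "quandle X" and x: "x \<in> qcar X"
  shows "orbit X x \<subseteq> qcar X"
proof
  fix y assume "y \<in> orbit X x"
  then show "y \<in> qcar X"
    by induction (use q x in \<open>auto simp: quandle_def\<close>)
qed

lemma coord_step:
  assumes q: "\<forall>i<n. quandle (Xs i)" and g: "g \<in> orbit (prod_qnd n Xs) f"
    and f: "f \<in> qcar (prod_qnd n Xs)" and j: "j < n" and z: "z \<in> qcar (Xs j)"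
  shows "g(j := qop (Xs j) (g j) z) \<in> orbit (prod_qnd n Xs) f"
    "g(j := qinv (Xs j) (g j) z) \<in> orbit (prod_qnd n Xs) f"
proof -
  let ?P = "prod_qnd n Xs"
  have gc: "g \<in> qcar ?P" using orbit_sub'[OF prod_quandle[OF q] f] g by blast
  have cI: "\<And>i. i < n \<Longrightarrow> g i \<in> qcar (Xs i)" using gc unfolding prod_car by blast
  have cU: "\<And>i. \<not> i < n \<Longrightarrow> g i = undefined" using gc unfolding prod_car by blast
  have q': "\<And>i. i < n \<Longrightarrow> quandle (Xs i)" using q by blast
  have hc: "g(j := z) \<in> qcar ?P" unfolding prod_car using cI cU z j by auto
  have "qop ?P g (g(j := z)) = g(j := qop (Xs j) (g j) z)"
    unfolding prod_op by (rule ext) (use j in \<open>simp add: qax(3)[OF q' cI cI] cU\<close>)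
  moreover have "qinv ?P g (g(j := z)) = g(j := qinv (Xs j) (g j) z)"
    unfolding prod_op by (rule ext) (use j in \<open>simp add: qax(4)[OF q' cI cI] cU\<close>)
  ultimately have "qop ?P g (g(j := z)) = g(j := qop (Xs j) (g j) z)"
       "qinv ?P g (g(j := z)) = g(j := qinv (Xs j) (g j) z)" by blast+
  then show "g(j := qop (Xs j) (g j) z) \<in> orbit ?P f"
    "g(j := qinv (Xs j) (g j) z) \<in> orbit ?P f"
    using orbit.orbit_op[OF g hc] orbit.orbit_inv[OF g hc] by simp_all
qed

lemma bspec_mp_helper: "\<forall>x\<in>A. P x \<longrightarrow> Q x \<Longrightarrow> a \<in> A \<Longrightarrow> P a \<Longrightarrow> Q a"
  by blast

lemma PiE_alt: "g \<in> (\<Pi>\<^sub>E i\<in>{..<n}. A i) \<longleftrightarrow> (\<forall>i. (i < n \<longrightarrow> g i \<in> A i) \<and> (\<not> i < n \<longrightarrow> g i = undefined))"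
  by (auto simp: PiE_iff extensional_def)

lemma orbit_prod:
  assumes q: "\<forall>i<n. quandle (Xs i)" and f: "f \<in> qcar (prod_qnd n Xs)"
  shows "orbit (prod_qnd n Xs) f = (\<Pi>\<^sub>E i\<in>{..<n}. orbit (Xs i) (f i))"
proof
  let ?P = "prod_qnd n Xs"
  show "orbit ?P f \<subseteq> (\<Pi>\<^sub>E i\<in>{..<n}. orbit (Xs i) (f i))"
  proof
    fix g assume "g \<in> orbit ?P f"
    then show "g \<in> (\<Pi>\<^sub>E i\<in>{..<n}. orbit (Xs i) (f i))"
    proof induction
      case orbit_base then show ?case
        unfolding PiE_alt using f unfolding prod_car by (simp add: orbit.orbit_base)
    next
      case (orbit_op w z)
      have z: "\<And>i. i < n \<Longrightarrow> z i \<in> qcar (Xs i)" using orbit_op(2) unfolding prod_car by blast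
      have w: "\<And>i. i < n \<Longrightarrow> w i \<in> orbit (Xs i) (f i)" using orbit_op(3) unfolding PiE_alt by blast
      show ?case unfolding PiE_alt prod_op using z w by (simp add: orbit.orbit_op)
    next
      case (orbit_inv w z)
      have z: "\<And>i. i < n \<Longrightarrow> z i \<in> qcar (Xs i)" using orbit_inv(2) unfolding prod_car by blast
      have w: "\<And>i. i < n \<Longrightarrow> w i \<in> orbit (Xs i) (f i)" using orbit_inv(3) unfolding PiE_alt by blast
      show ?case unfolding PiE_alt prod_op using z w by (simp add: orbit.orbit_inv)
    qed
  qed
next
  let ?P = "prod_qnd n Xs"
  have fe: "\<And>i. \<not> i < n \<Longrightarrow> f i = undefined" using f unfolding prod_car by blast
  have main: "\<forall>g \<in> (\<Pi>\<^sub>E i\<in>{..<n}. orbit (Xs i) (f i)). (\<forall>i. k \<le> i \<longrightarrow> g i = f i) \<longrightarrow> g \<in> orbit ?P f" for k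
  proof (induction k)
    case 0
    show ?case
    proof (intro ballI impI)
      fix g assume "\<forall>i. 0 \<le> i \<longrightarrow> g i = f i"
      then have "g = f" by (simp add: fun_eq_iff)
      then show "g \<in> orbit ?P f" by (simp add: orbit.orbit_base)
    qed
  next
    case (Suc k)
    show ?case
    proof (intro ballI impI)
      fix g assume g: "g \<in> (\<Pi>\<^sub>E i\<in>{..<n}. orbit (Xs i) (f i))" and ag: "\<forall>i. Suc k \<le> i \<longrightarrow> g i = f i"
      let ?g' = "g(k := f k)"
      have gA: "\<And>i. i < n \<Longrightarrow> g i \<in> orbit (Xs i) (f i)" using g unfolding PiE_alt by blast
      have gU: "\<And>i. \<not> i < n \<Longrightarrow> g i = undefined" using g unfolding PiE_alt by blast
      have g'm: "?g' \<in> (\<Pi>\<^sub>E i\<in>{..<n}. orbit (Xs i) (f i))"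
        unfolding PiE_alt
      proof (intro allI conjI impI)
        fix i assume "i < n" then show "?g' i \<in> orbit (Xs i) (f i)"
          using gA by (simp add: orbit.orbit_base)
      next
        fix i assume "\<not> i < n" then show "?g' i = undefined"
          using gU fe by simp
      qed
      have ag': "\<forall>i. k \<le> i \<longrightarrow> ?g' i = f i"
      proof (intro allI impI)
        fix i assume ki: "k \<le> i"
        show "?g' i = f i"
        proof (cases "i = k")
          case True then show ?thesis by simp
        next
          case False then have "Suc k \<le> i" using ki by simp
          then show ?thesis using ag False by simp
        qed
      qed
      have g'o: "?g' \<in> orbit ?P f" using bspec[OF Suc.IH g'm] ag' by (rule mp)
      show "g \<in> orbit ?P f"
      proof (cases "k < n")
        case False
        have "g k = f k" using gU fe False by simp
        then have "?g' = g" by (metis fun_upd_triv)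
        then show ?thesis using g'o by simp
      next
        case True
        have "?g'(k := y) \<in> orbit ?P f" if "y \<in> orbit (Xs k) (f k)" for y
          using that
        proof induction
          case orbit_base show ?case using g'o by (simp only: fun_upd_upd)
        next
          case (orbit_op w z)
          from coord_step(1)[OF q orbit_op(3) f True orbit_op(2)] show ?case by (simp only: fun_upd_upd fun_upd_same)
        next
          case (orbit_inv w z)
          from coord_step(2)[OF q orbit_inv(3) f True orbit_inv(2)] show ?case by (simp only: fun_upd_upd fun_upd_same)
        qed
        moreover have "g k \<in> orbit (Xs k) (f k)" using gA True by blast
        ultimately have "?g'(k := g k) \<in> orbit ?P f" .
        then show ?thesis by simp
      qed
    qed
  qed
  show "(\<Pi>\<^sub>E i\<in>{..<n}. orbit (Xs i) (f i)) \<subseteq> orbit ?P f"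
  proof
    fix g assume g: "g \<in> (\<Pi>\<^sub>E i\<in>{..<n}. orbit (Xs i) (f i))"
    have "\<forall>i. n \<le> i \<longrightarrow> g i = f i"
    proof (intro allI impI)
      fix i assume "n \<le> i"
      then have "\<not> i < n" by simp
      moreover have "\<not> i < n \<longrightarrow> g i = undefined" using g unfolding PiE_alt by blast
      ultimately show "g i = f i" using fe by simp
    qed
    then show "g \<in> orbit ?P f" by (rule bspec_mp_helper[OF main[of n] g])
  qed
qed


lemma part3:
  assumes a: "\<forall>i<n. quandle (Xs i) \<and> subquandle (Ms i) (Xs i)"
  shows "pb_closure (prod_qnd n Xs) (\<Pi>\<^sub>E i\<in>{..<n}. Ms i)
          = (\<Pi>\<^sub>E i\<in>{..<n}. pb_closure (Xs i) (Ms i))"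
proof -
  let ?P = "prod_qnd n Xs"
  have q: "\<forall>i<n. quandle (Xs i)" using a by blast
  have Mi: "\<And>i. i < n \<Longrightarrow> Ms i \<subseteq> qcar (Xs i)" using a by (auto simp: subquandle_def)
  have Ms: "(\<Pi>\<^sub>E i\<in>{..<n}. Ms i) \<subseteq> qcar ?P" 
  proof
    fix m assume "m \<in> (\<Pi>\<^sub>E i\<in>{..<n}. Ms i)"
    then show "m \<in> qcar ?P" unfolding PiE_alt prod_car using Mi by blast
  qed
  have "pb_closure ?P (\<Pi>\<^sub>E i\<in>{..<n}. Ms i) = (\<Union>m\<in>(\<Pi>\<^sub>E i\<in>{..<n}. Ms i). orbit ?P m)"
    using pb_char[OF prod_quandle[OF q] Ms] .
  also have "\<dots> = (\<Union>m\<in>(\<Pi>\<^sub>E i\<in>{..<n}. Ms i). (\<Pi>\<^sub>E i\<in>{..<n}. orbit (Xs i) (m i)))"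
  proof (rule SUP_cong[OF refl])
    fix m assume "m \<in> (\<Pi>\<^sub>E i\<in>{..<n}. Ms i)"
    then have "m \<in> qcar ?P" using Ms by blast
    then show "orbit ?P m = (\<Pi>\<^sub>E i\<in>{..<n}. orbit (Xs i) (m i))" by (rule orbit_prod[OF q])
  qed
  also have "\<dots> = (\<Pi>\<^sub>E i\<in>{..<n}. (\<Union>m\<in>Ms i. orbit (Xs i) m))"
  proof
    show "(\<Union>m\<in>(\<Pi>\<^sub>E i\<in>{..<n}. Ms i). (\<Pi>\<^sub>E i\<in>{..<n}. orbit (Xs i) (m i)))
      \<subseteq> (\<Pi>\<^sub>E i\<in>{..<n}. (\<Union>m\<in>Ms i. orbit (Xs i) m))"
    proof
      fix g assume "g \<in> (\<Union>m\<in>(\<Pi>\<^sub>E i\<in>{..<n}. Ms i). (\<Pi>\<^sub>E i\<in>{..<n}. orbit (Xs i) (m i)))"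
      then obtain m where m: "m \<in> (\<Pi>\<^sub>E i\<in>{..<n}. Ms i)" and g: "g \<in> (\<Pi>\<^sub>E i\<in>{..<n}. orbit (Xs i) (m i))"
        by blast
      show "g \<in> (\<Pi>\<^sub>E i\<in>{..<n}. (\<Union>m\<in>Ms i. orbit (Xs i) m))"
        unfolding PiE_iff
      proof (intro conjI ballI)
        fix i assume i: "i \<in> {..<n}"
        have "m i \<in> Ms i" using m i by (simp add: PiE_iff)
        moreover have "g i \<in> orbit (Xs i) (m i)" using g i by (simp add: PiE_iff)
        ultimately show "g i \<in> (\<Union>m\<in>Ms i. orbit (Xs i) m)" by blast
      next
        show "g \<in> extensional {..<n}" using g by (simp add: PiE_iff)
      qed
    qed
  next
    show "(\<Pi>\<^sub>E i\<in>{..<n}. (\<Union>m\<in>Ms i. orbit (Xs i) m)) \<subseteq>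
      (\<Union>m\<in>(\<Pi>\<^sub>E i\<in>{..<n}. Ms i). (\<Pi>\<^sub>E i\<in>{..<n}. orbit (Xs i) (m i)))"
    proof
      fix g assume g: "g \<in> (\<Pi>\<^sub>E i\<in>{..<n}. (\<Union>m\<in>Ms i. orbit (Xs i) m))"
      define m where "m = restrict (\<lambda>i. SOME a. a \<in> Ms i \<and> g i \<in> orbit (Xs i) a) {..<n}"
      have ex: "\<exists>a. a \<in> Ms i \<and> g i \<in> orbit (Xs i) a" if "i < n" for i
        using g that unfolding PiE_alt by blast
      have ms: "m i \<in> Ms i \<and> g i \<in> orbit (Xs i) (m i)" if "i < n" for i
      proof -
        have "m i = (SOME a. a \<in> Ms i \<and> g i \<in> orbit (Xs i) a)" using that by (simp add: m_def)
        then show ?thesis using someI_ex[OF ex[OF that]] by simp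
      qed
      have mU: "m i = undefined" if "\<not> i < n" for i using that by (simp add: m_def)
      have "m \<in> (\<Pi>\<^sub>E i\<in>{..<n}. Ms i)" unfolding PiE_alt using ms mU by blast
      moreover have "g \<in> (\<Pi>\<^sub>E i\<in>{..<n}. orbit (Xs i) (m i))"
        unfolding PiE_alt using ms g unfolding PiE_alt by blast
      ultimately show "g \<in> (\<Union>m\<in>(\<Pi>\<^sub>E i\<in>{..<n}. Ms i). (\<Pi>\<^sub>E i\<in>{..<n}. orbit (Xs i) (m i)))"
        by blast
    qed
  qed
  also have "\<dots> = (\<Pi>\<^sub>E i\<in>{..<n}. pb_closure (Xs i) (Ms i))"
  proof (rule PiE_cong)
    fix i assume "i \<in> {..<n}"
    then have "i < n" by simp
    then show "(\<Union>m\<in>Ms i. orbit (Xs i) m) = pb_closure (Xs i) (Ms i)"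
      using pb_char[OF _ Mi] q by simp
  qed
  finally show ?thesis .
qed

theorem mainTheorem3:
  shows "(\<forall>(X :: 'a qnd) x. quandle X \<and> x \<in> qcar X \<longrightarrow> pb_closure X {x} = orbit X x)
   \<and> (\<forall>(X :: 'a qnd) (I :: 'i set) (S :: 'i \<Rightarrow> 'a set).
        quandle X \<and> (\<forall>i\<in>I. subquandle (S i) X) \<longrightarrow>
        pb_closure X (sub_gen X (\<Union>i\<in>I. S i)) = sub_gen X (\<Union>i\<in>I. pb_closure X (S i)))
   \<and> (\<forall>(n :: nat) (Xs :: nat \<Rightarrow> 'a qnd) (Ms :: nat \<Rightarrow> 'a set).
        (\<forall>i<n. quandle (Xs i) \<and> subquandle (Ms i) (Xs i)) \<longrightarrow>
        pb_closure (prod_qnd n Xs) (\<Pi>\<^sub>E i\<in>{..<n}. Ms i)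
          = (\<Pi>\<^sub>E i\<in>{..<n}. pb_closure (Xs i) (Ms i)))
   \<and> (\<forall>(X :: 'a qnd) (Y :: 'b qnd) f M.
        quandle X \<and> quandle Y \<and> qhom X Y f \<and> f ` qcar X = qcar Y \<and> subquandle M X \<longrightarrow>
        f ` pb_closure X M = pb_closure Y (f ` M))"
  proof (intro conjI allI impI)
  fix X :: "'a qnd" and x assume "quandle X \<and> x \<in> qcar X"
  then have q: "quandle X" and x: "x \<in> qcar X" by simp_all
  have "{x} \<subseteq> qcar X" using x by simp
  then show "pb_closure X {x} = orbit X x" using pb_char[OF q] by simp
next
  fix X :: "'a qnd" and I :: "'i set" and S
  assume "quandle X \<and> (\<forall>i\<in>I. subquandle (S i) X)"
  then show "pb_closure X (sub_gen X (\<Union>i\<in>I. S i)) = sub_gen X (\<Union>i\<in>I. pb_closure X (S i))"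
    by (intro part2) simp_all
next
  fix n and Xs :: "nat \<Rightarrow> 'a qnd" and Ms
  assume "\<forall>i<n. quandle (Xs i) \<and> subquandle (Ms i) (Xs i)"
  then show "pb_closure (prod_qnd n Xs) (\<Pi>\<^sub>E i\<in>{..<n}. Ms i)
          = (\<Pi>\<^sub>E i\<in>{..<n}. pb_closure (Xs i) (Ms i))" by (rule part3)
next
  fix X :: "'a qnd" and Y :: "'b qnd" and f M
  assume "quandle X \<and> quandle Y \<and> qhom X Y f \<and> f ` qcar X = qcar Y \<and> subquandle M X"
  then show "f ` pb_closure X M = pb_closure Y (f ` M)" by (intro part4) simp_all
qed

end
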